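(* Let $n$ be a positive integer. (a) If $\lambda^{n/2}>\frac{2\sqrt2\, dC_1}{|\theta|}$, then $\langle k_n\theta\rangle=-\frac{dZ_n}{\theta}$. (b) If $\lambda^{n/2}>2dC_1$, then $\langle k_n\theta^2\rangle=-dY_n$.
   Context: Standing setup: $p,q\in\mathbb{Z}$ are such that $x^3-px-q$ is irreducible over $\mathbb{Q}$ with exactly one real root $\theta$ (one has $3\theta^2-4p>0$ and $3\theta^2-p>0$). $K=\mathbb{Q}(\theta)\subset\mathbb{R}$, $\mathcal{O}_K$ its ring of integers. $d$ is a positive integer with $\mathcal{O}_K\subseteq\frac1d\mathbb{Z}[\theta]$. $\lambda\in\mathcal{O}_K$ is a unit with $\lambda>1$. For $n\ge1$ the rationals $a_n,b_n,c_n$ are defined by $a_n+b_n\theta+c_n\theta^2=\lambda^n$, and $X_n=a_n+pc_n-b_n\theta$, $Y_n=a_n+pc_n-c_n\theta^2$, $Z_n=b_n\theta-c_n\theta^2$, $k_n=dc_n$. Constants: $C_1=\max\{\sqrt2,\ \frac{\sqrt2|\theta|}{\sqrt{3\theta^2-4p}}\}$, $C_2=\frac{\sqrt d}{\sqrt{3\theta^2-p}}$. For $x\in\mathbb{R}$, $\langle x\rangle=x-\lfloor x+\tfrac12\rfloor$ and $\|x\|=|\langle x\rangle|$. *)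

theory Defs
  imports "HOL-Analysis.Analysis" "HOL-Computational_Algebra.Computational_Algebra"
begin

definition alg_int :: "real \<Rightarrow> bool" where
  "alg_int x \<longleftrightarrow> (\<exists>f :: int poly. lead_coeff f = 1 \<and> poly (map_poly of_int f) x = 0)"

text \<open>The number field Q(theta) (theta algebraic, so Q(theta) = Q[theta]).\<close>
definition num_field :: "real \<Rightarrow> real set" where
  "num_field \<theta> = {poly (map_poly of_rat f) \<theta> | f :: rat poly. True}"

definition ring_of_ints :: "real \<Rightarrow> real set" where
  "ring_of_ints \<theta> = {x \<in> num_field \<theta>. alg_int x}"

definition scaled_Z_theta :: "nat \<Rightarrow> real \<Rightarrow> real set" where
  "scaled_Z_theta d \<theta> = {poly (map_poly of_int f) \<theta> / real d | f :: int poly. True}"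

definition is_unit_OK :: "real \<Rightarrow> real \<Rightarrow> bool" where
  "is_unit_OK \<theta> l \<longleftrightarrow> l \<in> ring_of_ints \<theta> \<and> (\<exists>m \<in> ring_of_ints \<theta>. l * m = 1)"

definition signed_frac :: "real \<Rightarrow> real" where
  "signed_frac x = x - of_int \<lfloor>x + 1/2\<rfloor>"

end

theory Submission
  imports Defs "Jordan_Normal_Form.Char_Poly" "HOL-Computational_Algebra.Field_as_Ring"
begin
lemma alg_int_pow:
  assumes "alg_int x" shows "alg_int (x^k)"
proof -
  obtain f :: "int poly" where f1: "lead_coeff f = 1" and f0: "poly (map_poly of_int f) x = 0"
    using assms unfolding alg_int_def by blast
  define m where "m = degree f"
  have m1: "m \<ge> 1"
  proof (rule ccontr)
    assume "\<not> m \<ge> 1"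
    hence "degree f = 0" unfolding m_def by simp
    then have "f = [:1:]" using f1 degree_0_id[of f] by auto
    thus False using f0 by simp
  qed
  define Ci :: "int mat" where "Ci = mat m m (\<lambda>(i,j). if i + 1 < m then (if j = i+1 then 1 else 0) else - coeff f j)"
  define C :: "real mat" where "C = map_mat of_int Ci"
  define v :: "real vec" where "v = vec m (\<lambda>j. x^j)"
  have Ci_car: "Ci \<in> carrier_mat m m" unfolding Ci_def by simp
  have C_car: "C \<in> carrier_mat m m" unfolding C_def Ci_def by simp
  have v_car: "v \<in> carrier_vec m" unfolding v_def by simp
  have poly_sum: "(\<Sum>j<m. real_of_int (coeff f j) * x^j) + x^m = 0"
  proof -
    have "poly (map_poly of_int f) x = (\<Sum>j\<le>m. real_of_int (coeff f j) * x^j)"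
      unfolding poly_altdef m_def by (simp add: of_int_hom.coeff_map_poly_hom degree_map_poly)
    also have "\<dots> = (\<Sum>j<m. real_of_int (coeff f j) * x^j) + x^m"
      using f1 unfolding m_def by (simp add: lessThan_Suc_atMost[symmetric])
    finally show ?thesis using f0 by simp
  qed
  have Cv: "C *\<^sub>v v = x \<cdot>\<^sub>v v"
  proof (rule eq_vecI)
    show "dim_vec (C *\<^sub>v v) = dim_vec (x \<cdot>\<^sub>v v)" using C_car v_car by simp
  next
    fix i assume "i < dim_vec (x \<cdot>\<^sub>v v)"
    hence i: "i < m" unfolding v_def by simp
    have "(C *\<^sub>v v) $ i = (\<Sum>j<m. C $$ (i,j) * x^j)"
      using i C_car unfolding v_def by (simp add: scalar_prod_def lessThan_atLeast0)
    also have "\<dots> = x^(i+1)"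
    proof (cases "i + 1 < m")
      case True
      have "(\<Sum>j<m. C $$ (i,j) * x^j) = (\<Sum>j<m. if j = i+1 then x^j else 0)"
        by (rule sum.cong, insert i True, auto simp: C_def Ci_def)
      also have "\<dots> = x^(i+1)" using True by simp
      finally show ?thesis .
    next
      case False
      hence im: "i + 1 = m" using i by simp
      have "(\<Sum>j<m. C $$ (i,j) * x^j) = (\<Sum>j<m. - (real_of_int (coeff f j) * x^j))"
        by (rule sum.cong, insert i False, auto simp: C_def Ci_def)
      also have "\<dots> = x^m" using poly_sum by (simp add: sum_negf) 
      finally show ?thesis using im by simp
    qed
    finally show "(C *\<^sub>v v) $ i = (x \<cdot>\<^sub>v v) $ i" using i unfolding v_def by simp
  qed
  have ev: "eigenvector C v x"
  proof -
    have "v $ 0 = 1" using m1 unfolding v_def by simp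
    have "v \<noteq> 0\<^sub>v m"
    proof
      assume "v = 0\<^sub>v m"
      hence "v $ 0 = 0" using m1 by simp
      with \<open>v $ 0 = 1\<close> show False by simp
    qed
    thus ?thesis unfolding eigenvector_def using C_car v_car Cv by simp
  qed
  have "C ^\<^sub>m k *\<^sub>v v = x^k \<cdot>\<^sub>v v" by (rule eigenvector_pow[OF C_car ev])
  hence "eigenvector (C ^\<^sub>m k) v (x^k)" using ev C_car unfolding eigenvector_def by simp
  hence "eigenvalue (C ^\<^sub>m k) (x^k)" unfolding eigenvalue_def by blast
  hence r: "poly (char_poly (C ^\<^sub>m k)) (x^k) = 0"
    using eigenvalue_root_char_poly[OF pow_carrier_mat[OF C_car]] by blast
  have "C ^\<^sub>m k = map_mat of_int (Ci ^\<^sub>m k)"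
    unfolding C_def by (rule of_int_hom.mat_hom_pow[OF Ci_car, symmetric])
  hence "char_poly (C ^\<^sub>m k) = map_poly of_int (char_poly (Ci ^\<^sub>m k))"
    using of_int_hom.char_poly_hom[OF pow_carrier_mat[OF Ci_car]] by simp
  moreover have "lead_coeff (char_poly (Ci ^\<^sub>m k)) = 1"
    using degree_monic_char_poly[OF pow_carrier_mat[OF Ci_car]] by simp
  ultimately show ?thesis using r unfolding alg_int_def by metis
qed
lemma red_int:
  fixes p q :: int and f :: "int poly"
  shows "\<exists>r0 r1 r2 :: int. \<forall>z::'a::comm_ring_1. z^3 = of_int p * z + of_int q \<longrightarrow>
     poly (map_poly of_int f) z = of_int r0 + of_int r1 * z + of_int r2 * z^2"
proof (induction f rule: pCons_induct)
  case 0
  show ?case by (rule exI[of _ 0], rule exI[of _ 0], rule exI[of _ 0]) simp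
next
  case (pCons c f)
  then obtain r0 r1 r2 :: int where IH: "\<And>z::'a. z^3 = of_int p * z + of_int q \<Longrightarrow>
     poly (map_poly of_int f) z = of_int r0 + of_int r1 * z + of_int r2 * z^2" by blast
  show ?case
  proof (intro exI allI impI)
    fix z :: 'a assume z: "z^3 = of_int p * z + of_int q"
    have "poly (map_poly of_int (pCons c f)) z = of_int c + z * poly (map_poly of_int f) z"
      by (simp add: of_int_hom.map_poly_pCons_hom)
    also have "\<dots> = of_int c + z * (of_int r0 + of_int r1 * z + of_int r2 * z^2)" using IH[OF z] by simp
    also have "\<dots> = of_int c + of_int r2 * z^3 + of_int r0 * z + of_int r1 * z^2"
      by (simp add: algebra_simps power2_eq_square power3_eq_cube)
    also have "\<dots> = of_int (c + r2 * q) + of_int (r0 + r2 * p) * z + of_int r1 * z^2"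
      unfolding z by (simp add: algebra_simps)
    finally show "poly (map_poly of_int (pCons c f)) z = of_int (c + r2 * q) + of_int (r0 + r2 * p) * z + of_int r1 * z^2" .
  qed
qed
lemma indep:
  fixes p q :: int and \<theta> :: real and r0 r1 r2 :: rat
  assumes irr: "irreducible [:-(of_int q), -(of_int p), 0, 1 :: rat:]"
    and root: "\<theta>^3 - of_int p * \<theta> - of_int q = 0"
    and z: "of_rat r0 + of_rat r1 * \<theta> + of_rat r2 * \<theta>^2 = 0"
  shows "r0 = 0 \<and> r1 = 0 \<and> r2 = 0"
proof (rule ccontr)
  assume nz: "\<not> (r0 = 0 \<and> r1 = 0 \<and> r2 = 0)"
  define P where "P = [:-(of_int q), -(of_int p), 0, 1 :: rat:]"
  define Q where "Q = [:r0, r1, r2:]"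
  have Qnz: "Q \<noteq> 0" using nz unfolding Q_def by auto
  have dP: "degree P = 3" unfolding P_def by simp
  have dQ: "degree Q \<le> 2" unfolding Q_def by (simp add: degree_pCons_le)
  have "\<not> P dvd Q" using dvd_imp_degree_le[OF _ Qnz] dP dQ by fastforce
  moreover have "prime_elem P" using irr unfolding P_def by (rule irreducible_imp_prime_elem)
  ultimately have "coprime P Q" by (rule prime_elem_imp_coprime[rotated])
  hence "gcd P Q = 1" by simp
  hence bez: "fst (bezout_coefficients P Q) * P + snd (bezout_coefficients P Q) * Q = 1"
    using bezout_coefficients_fst_snd[of P Q] by simp
  interpret mp: map_poly_comm_ring_hom "of_rat :: rat \<Rightarrow> real" ..
  define u where "u = fst (bezout_coefficients P Q)"
  define v where "v = snd (bezout_coefficients P Q)"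
  have "poly (map_poly of_rat (u * P + v * Q)) \<theta> = (1::real)" using bez unfolding u_def v_def by simp
  moreover have "poly (map_poly of_rat P) \<theta> = (0::real)" unfolding P_def using root by (simp add: of_rat_hom.map_poly_pCons_hom of_rat_minus algebra_simps power3_eq_cube)
  moreover have "poly (map_poly of_rat Q) \<theta> = (0::real)" unfolding Q_def using z by (simp add: of_rat_hom.map_poly_pCons_hom algebra_simps power2_eq_square)
  ultimately show False by (simp add: mp.hom_add mp.hom_mult)
qed
lemma red_step:
  fixes p q :: int and z :: "'a::field_char_0" and c r0 r1 r2 :: rat
  assumes z: "z^3 = of_int p * z + of_int q"
    and IH: "poly (map_poly of_rat f) z = of_rat r0 + of_rat r1 * z + of_rat r2 * z^2"
  shows "poly (map_poly of_rat (pCons c f)) z = of_rat (c + r2 * of_int q) + of_rat (r0 + r2 * of_int p) * z + of_rat r1 * z^2"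
proof -
  have "poly (map_poly of_rat (pCons c f)) z = of_rat c + z * poly (map_poly of_rat f) z"
    by (simp add: of_rat_hom.map_poly_pCons_hom)
  also have "\<dots> = of_rat c + z * (of_rat r0 + of_rat r1 * z + of_rat r2 * z^2)" using IH by simp
  also have "\<dots> = of_rat c + of_rat r2 * z^3 + of_rat r0 * z + of_rat r1 * z^2"
    by (simp add: algebra_simps power2_eq_square power3_eq_cube)
  also have "\<dots> = of_rat (c + r2 * of_int q) + of_rat (r0 + r2 * of_int p) * z + of_rat r1 * z^2"
    unfolding z by (simp add: algebra_simps of_rat_add of_rat_mult)
  finally show ?thesis .
qed

lemma red_rat2:
  fixes p q :: int and f :: "rat poly"
  shows "\<exists>r0 r1 r2 :: rat. (\<forall>z::real. z^3 = of_int p * z + of_int q \<longrightarrow>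
     poly (map_poly of_rat f) z = of_rat r0 + of_rat r1 * z + of_rat r2 * z^2)
   \<and> (\<forall>z::complex. z^3 = of_int p * z + of_int q \<longrightarrow>
     poly (map_poly of_rat f) z = of_rat r0 + of_rat r1 * z + of_rat r2 * z^2)"
proof (induction f rule: pCons_induct)
  case 0
  show ?case by (rule exI[of _ 0], rule exI[of _ 0], rule exI[of _ 0]) simp
next
  case (pCons c f)
  then obtain r0 r1 r2 :: rat where IH1: "\<And>z::real. z^3 = of_int p * z + of_int q \<Longrightarrow>
     poly (map_poly of_rat f) z = of_rat r0 + of_rat r1 * z + of_rat r2 * z^2"
    and IH2: "\<And>z::complex. z^3 = of_int p * z + of_int q \<Longrightarrow>
     poly (map_poly of_rat f) z = of_rat r0 + of_rat r1 * z + of_rat r2 * z^2" by blast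
  show ?case
    by (rule exI[of _ "c + r2 * of_int q"], rule exI[of _ "r0 + r2 * of_int p"], rule exI[of _ r1])
      (auto intro: red_step IH1 IH2)
qed

lemma of_rat_complex: "(of_rat r :: complex) = of_real (of_rat r)"
  by (cases r) (simp add: of_rat_rat)

lemma signed_frac_int_plus:
  assumes "\<bar>e\<bar> < 1/2"
  shows "signed_frac (of_int m + e) = e"
proof -
  have "\<lfloor>of_int m + e + 1/2\<rfloor> = m"
    using assms by (intro floor_unique) auto
  thus ?thesis unfolding signed_frac_def by simp
qed

lemma theta_facts:
  fixes p q :: int and \<theta> :: real
  assumes irr: "irreducible [:-(of_int q), -(of_int p), 0, 1 :: rat:]"
    and root: "\<theta>^3 - of_int p * \<theta> - of_int q = 0"
    and unique_root: "\<forall>x::real. x^3 - of_int p * x - of_int q = 0 \<longrightarrow> x = \<theta>"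
  shows "\<theta> \<noteq> 0" "3 * \<theta>^2 - 4 * of_int p > 0"
proof -
  show th0: "\<theta> \<noteq> 0"
  proof
    assume "\<theta> = 0"
    hence q0: "q = 0" using root by simp
    have "[:-(of_int q), -(of_int p), 0, 1 :: rat:] = [:0, 1:] * [:-(of_int p), 0, 1:]"
      using q0 by simp
    from irreducibleD[OF irr this] have "is_unit [:0, 1::rat:] \<or> is_unit [:-(of_int p), 0, 1::rat:]" .
    thus False by (auto simp: is_unit_iff_degree)
  qed
  show "3 * \<theta>^2 - 4 * of_int p > 0"
  proof (rule ccontr)
    assume "\<not> ?thesis"
    hence nn: "4 * of_int p - 3 * \<theta>^2 \<ge> 0" by simp
    define s where "s = sqrt (4 * of_int p - 3 * \<theta>^2)"
    have s2: "s^2 = 4 * of_int p - 3 * \<theta>^2" unfolding s_def using nn by simp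
    have r: "x^3 - of_int p * x - of_int q = 0" if "x = (-\<theta> + s)/2 \<or> x = (-\<theta> - s)/2" for x
    proof -
      have "2*x+\<theta> = s \<or> 2*x+\<theta> = -s" using that by auto
      hence e: "(2*x+\<theta>)^2 = s^2" by auto
      have e2: "4*(x^2 + \<theta> * x + \<theta>^2 - of_int p) = (2*x+\<theta>)^2 + 3*\<theta>^2 - 4 * of_int p"
        by (simp add: power2_eq_square algebra_simps)
      have "x^2 + \<theta> * x + \<theta>^2 - of_int p = 0" using e e2 s2 by simp
      hence "(x - \<theta>) * (x^2 + \<theta> * x + \<theta>^2 - of_int p) + (\<theta>^3 - of_int p * \<theta> - of_int q) = 0"
        using root by simp
      thus ?thesis by (simp add: algebra_simps power2_eq_square power3_eq_cube)
    qed
    have "(-\<theta> + s)/2 = \<theta>" "(-\<theta> - s)/2 = \<theta>" using unique_root r by blast+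
    hence "\<theta> = 0" by simp
    with th0 show False by simp
  qed
qed
lemma complex_cube: "(Complex x y)^3 = Complex (x^3 - 3*x*y^2) (3*x^2*y - y^3)"
  by (simp add: complex_eq_iff power3_eq_cube power2_eq_square algebra_simps)

lemma sigma_root:
  fixes \<theta> s :: real and p q :: int
  assumes h1: "\<theta>^3 = of_int p * \<theta> + of_int q" and h2: "s^2 = 3 * \<theta>^2 - 4 * of_int p"
  shows "(Complex (-\<theta>/2) (s/2))^3 = of_int p * Complex (-\<theta>/2) (s/2) + of_int q"
proof -
  have re: "(-\<theta>/2)^3 - 3*(-\<theta>/2)*(s/2)^2 = of_int p * (-\<theta>/2) + of_int q"
  proof -
    have "(-\<theta>/2)^3 - 3*(-\<theta>/2)*(s/2)^2 = (3 * \<theta> * s^2 - \<theta>^3) / 8"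
      by (simp add: field_simps power3_eq_cube power2_eq_square)
    also have "\<dots> = (3 * \<theta> * (3 * \<theta>^2 - 4 * of_int p) - \<theta>^3) / 8" unfolding h2 ..
    also have "\<dots> = (8 * \<theta>^3 - 12 * of_int p * \<theta>) / 8"
      by (simp add: algebra_simps power3_eq_cube power2_eq_square)
    also have "\<dots> = of_int p * (-\<theta>/2) + of_int q" unfolding h1 by (simp add: field_simps)
    finally show ?thesis .
  qed
  have im: "3*(-\<theta>/2)^2*(s/2) - (s/2)^3 = of_int p * (s/2)"
  proof -
    have "3*(-\<theta>/2)^2*(s/2) - (s/2)^3 = s * (3 * \<theta>^2 - s^2) / 8"
      by (simp add: field_simps power3_eq_cube power2_eq_square)
    also have "\<dots> = s * (4 * of_int p) / 8" unfolding h2 by simp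
    finally show ?thesis by simp
  qed
  have "(Complex (-\<theta>/2) (s/2))^3 = Complex (of_int p * (-\<theta>/2) + of_int q) (of_int p * (s/2))"
    unfolding complex_cube re im ..
  thus ?thesis by (simp add: complex_eq_iff)
qed
lemma nf_gen:
  fixes t s P Q a b c :: real
  assumes h1: "t^3 = P * t + Q" and h2: "s^2 = 3 * t^2 - 4 * P"
  shows "16 * ((a + b * t + c * t^2) * ((a - b * t / 2 + c * (t^2 - s^2) / 4)^2 + (b * s / 2 - c * t * s / 2)^2))
     = 16 * (a * (a + c * P)^2 - a * b^2 * P - 3 * a * b * c * Q - b * c^2 * P * Q + b^3 * Q + c^3 * Q^2)"
proof -
  have "16 * ((a + b * t + c * t^2) * ((a - b * t / 2 + c * (t^2 - s^2) / 4)^2 + (b * s / 2 - c * t * s / 2)^2))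
     = (a + b * t + c * t^2) * ((4*a - 2* b * t + c * (t^2 - s^2))^2 + 4 * s^2 * (b - c * t)^2)"
    by (simp add: field_simps power2_eq_square)
  also have "\<dots> = (a + b * t + c * t^2) * ((4*a - 2* b * t + c * (4 * P - 2 * t^2))^2 + 4 * (3 * t^2 - 4 * P) * (b - c * t)^2)"
    using h2 by simp
  also have "\<dots> = 16 * (a * (a + c * P)^2 - a * b^2 * P - 3 * a * b * c * Q - b * c^2 * P * Q + b^3 * Q + c^3 * Q^2)"
  proof -
    have "(a + b * t + c * t^2) * ((4*a - 2* b * t + c * (4 * P - 2 * t^2))^2 + 4 * (3 * t^2 - 4 * P) * (b - c * t)^2)
     - 16 * (a * (a + c * P)^2 - a * b^2 * P - 3 * a * b * c * Q - b * c^2 * P * Q + b^3 * Q + c^3 * Q^2)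
     = (t^3 - P * t - Q) * (16 * (c^3 * (t^3 - P * t + Q) - b * c^2 * P + b^3 - 3 * a * b * c))"
      by (simp add: algebra_simps power2_eq_square power3_eq_cube)
    thus ?thesis using h1 by simp
  qed
  finally show ?thesis .
qed
lemma norm_formula:
  fixes p q :: int and \<theta> s \<alpha> \<beta> \<gamma> :: real
  assumes r3: "\<theta>^3 = of_int p * \<theta> + of_int q" and s2: "s^2 = 3 * \<theta>^2 - 4 * of_int p"
  shows "(\<alpha> + \<beta> * \<theta> + \<gamma> * \<theta>^2) * (cmod (of_real \<alpha> + of_real \<beta> * Complex (-\<theta>/2) (s/2) + of_real \<gamma> * (Complex (-\<theta>/2) (s/2))^2))^2
     = \<alpha> * (\<alpha> + \<gamma> * of_int p)^2 - \<alpha> * \<beta>^2 * of_int p - 3 * \<alpha> * \<beta> * \<gamma> * of_int q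
       - \<beta> * \<gamma>^2 * of_int p * of_int q + \<beta>^3 * of_int q + \<gamma>^3 * (of_int q)^2"
proof -
  have re: "Re (of_real \<alpha> + of_real \<beta> * Complex (-\<theta>/2) (s/2) + of_real \<gamma> * (Complex (-\<theta>/2) (s/2))^2) = \<alpha> - \<beta> * \<theta> / 2 + \<gamma> * (\<theta>^2 - s^2) / 4"
    by (simp add: power2_eq_square field_simps)
  have im: "Im (of_real \<alpha> + of_real \<beta> * Complex (-\<theta>/2) (s/2) + of_real \<gamma> * (Complex (-\<theta>/2) (s/2))^2) = \<beta> * s / 2 - \<gamma> * \<theta> * s / 2"
    by (simp add: power2_eq_square field_simps)
  show ?thesis unfolding cmod_power2 re im using nf_gen[OF r3 s2, of \<alpha> \<beta> \<gamma>] by simp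
qed

lemma pow_lower_bound_ge1:
  fixes x :: real and d :: nat
  assumes "x > 0" "\<And>k. real d ^ 3 * x ^ k \<ge> 1" "d > 0"
  shows "x \<ge> 1"
proof (rule ccontr)
  assume "\<not> x \<ge> 1"
  hence "x < 1" by simp
  then obtain k where "x ^ k < 1 / real d ^ 3" using real_arch_pow_inv[of "1 / real d ^ 3" x] assms(3) by auto
  hence "real d ^ 3 * x ^ k < 1" using assms(3) by (simp add: field_simps)
  with assms(2)[of k] show False by simp
qed
theorem mainTheorem8:
  fixes p q :: int and \<theta> lam :: real and d n :: nat and a b c :: rat
  assumes irr: "irreducible [:-(of_int q), -(of_int p), 0, 1 :: rat:]"
    and root: "\<theta>^3 - of_int p * \<theta> - of_int q = 0"
    and unique_root: "\<forall>x::real. x^3 - of_int p * x - of_int q = 0 \<longrightarrow> x = \<theta>"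
    and d_pos: "d > 0"
    and d_OK: "ring_of_ints \<theta> \<subseteq> scaled_Z_theta d \<theta>"
    and unit: "is_unit_OK \<theta> lam"
    and lam_gt: "lam > 1"
    and n_pos: "n \<ge> 1"
    and abc: "lam^n = of_rat a + of_rat b * \<theta> + of_rat c * \<theta>^2"
  defines "C1 \<equiv> max (sqrt 2) (sqrt 2 * \<bar>\<theta>\<bar> / sqrt (3 * \<theta>^2 - 4 * of_int p))"
    and "Y \<equiv> of_rat a + of_int p * of_rat c - of_rat c * \<theta>^2"
    and "Z \<equiv> of_rat b * \<theta> - of_rat c * \<theta>^2"
    and "k \<equiv> real d * of_rat c"
  shows "(lam powr (real n / 2) > 2 * sqrt 2 * real d * C1 / \<bar>\<theta>\<bar>
            \<longrightarrow> signed_frac (k * \<theta>) = - (real d * Z / \<theta>))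
       \<and> (lam powr (real n / 2) > 2 * real d * C1
            \<longrightarrow> signed_frac (k * \<theta>^2) = - (real d * Y))"
proof -
  have th0: "\<theta> \<noteq> 0" and Dpos: "3 * \<theta>^2 - 4 * of_int p > 0"
    using theta_facts[OF irr root unique_root] by auto
  define s where "s = sqrt (3 * \<theta>^2 - 4 * of_int p)"
  have s_pos: "s > 0" unfolding s_def using Dpos by simp
  have s2: "s^2 = 3 * \<theta>^2 - 4 * of_int p" unfolding s_def using Dpos by simp
  have r3: "\<theta>^3 = of_int p * \<theta> + of_int q" using root by simp
  define \<sigma> where "\<sigma> = Complex (-\<theta>/2) (s/2)"
  have sr3: "\<sigma>^3 = of_int p * \<sigma> + of_int q" unfolding \<sigma>_def by (rule sigma_root[OF r3 s2])
  define ev :: "rat poly \<Rightarrow> real" where "ev f = poly (map_poly of_rat f) \<theta>" for f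
  define cj :: "rat poly \<Rightarrow> complex" where "cj f = poly (map_poly of_rat f) \<sigma>" for f
  interpret mpr: map_poly_comm_ring_hom "of_rat :: rat \<Rightarrow> real" ..
  interpret mpc: map_poly_comm_ring_hom "of_rat :: rat \<Rightarrow> complex" ..
  have ev_mult: "ev (f * g) = ev f * ev g" for f g unfolding ev_def by (simp add: mpr.hom_mult)
  have cj_mult: "cj (f * g) = cj f * cj g" for f g unfolding cj_def by (simp add: mpc.hom_mult)
  have ev_pow: "ev (f ^ j) = ev f ^ j" for f j unfolding ev_def by (simp add: mpr.hom_power poly_power)
  have cj_pow: "cj (f ^ j) = cj f ^ j" for f j unfolding cj_def by (simp add: mpc.hom_power poly_power)
  have ev_1: "ev 1 = 1" and cj_1: "cj 1 = 1" unfolding ev_def cj_def by simp_all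
  have red: "\<exists>r0 r1 r2 :: rat. ev f = of_rat r0 + of_rat r1 * \<theta> + of_rat r2 * \<theta>^2
      \<and> cj f = of_rat r0 + of_rat r1 * \<sigma> + of_rat r2 * \<sigma>^2" for f
    using red_rat2[of p q f] r3 sr3 unfolding ev_def cj_def by blast
  have coeq: "r0 = r0' \<and> r1 = r1' \<and> r2 = r2'"
    if "of_rat r0 + of_rat r1 * \<theta> + of_rat r2 * \<theta>^2 = of_rat r0' + of_rat r1' * \<theta> + of_rat r2' * \<theta>^2"
    for r0 r1 r2 r0' r1' r2' :: rat
  proof -
    have "of_rat (r0 - r0') + of_rat (r1 - r1') * \<theta> + of_rat (r2 - r2') * \<theta>^2 = 0"
      using that by (simp add: of_rat_diff algebra_simps)
    from indep[OF irr root this] show ?thesis by simp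
  qed
  have wd: "cj f = cj g" if "ev f = ev g" for f g
  proof -
    obtain r0 r1 r2 where rf: "ev f = of_rat r0 + of_rat r1 * \<theta> + of_rat r2 * \<theta>^2"
      "cj f = of_rat r0 + of_rat r1 * \<sigma> + of_rat r2 * \<sigma>^2" using red[of f] by blast
    obtain r0' r1' r2' where rg: "ev g = of_rat r0' + of_rat r1' * \<theta> + of_rat r2' * \<theta>^2"
      "cj g = of_rat r0' + of_rat r1' * \<sigma> + of_rat r2' * \<sigma>^2" using red[of g] by blast
    have "r0 = r0' \<and> r1 = r1' \<and> r2 = r2'" using coeq rf(1) rg(1) that by metis
    thus ?thesis using rf(2) rg(2) by simp
  qed
  have coords: "\<exists>\<alpha> \<beta> \<gamma> :: int. ev (h ^ j) = of_int \<alpha> / real d + of_int \<beta> / real d * \<theta> + of_int \<gamma> / real d * \<theta>^2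
      \<and> cj (h ^ j) = of_real (of_int \<alpha> / real d) + of_real (of_int \<beta> / real d) * \<sigma> + of_real (of_int \<gamma> / real d) * \<sigma>^2"
    if hO: "ev h \<in> ring_of_ints \<theta>" for h j
  proof -
    have "alg_int (ev h)" using hO unfolding ring_of_ints_def by simp
    hence ai: "alg_int (ev (h ^ j))" unfolding ev_pow by (rule alg_int_pow)
    have "ev (h ^ j) \<in> num_field \<theta>" unfolding num_field_def ev_def by blast
    hence "ev (h ^ j) \<in> scaled_Z_theta d \<theta>" using ai d_OK unfolding ring_of_ints_def by blast
    then obtain H :: "int poly" where H: "ev (h ^ j) = poly (map_poly of_int H) \<theta> / real d"
      unfolding scaled_Z_theta_def by blast
    obtain \<alpha> \<beta> \<gamma> :: int where abg: "poly (map_poly of_int H) \<theta> = of_int \<alpha> + of_int \<beta> * \<theta> + of_int \<gamma> * \<theta>^2"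
      using red_int[of p q H] r3 by blast
    obtain r0 r1 r2 where rr: "ev (h ^ j) = of_rat r0 + of_rat r1 * \<theta> + of_rat r2 * \<theta>^2"
      "cj (h ^ j) = of_rat r0 + of_rat r1 * \<sigma> + of_rat r2 * \<sigma>^2" using red[of "h ^ j"] by blast
    have "of_rat r0 + of_rat r1 * \<theta> + of_rat r2 * \<theta>^2
       = of_rat (of_int \<alpha> / of_nat d) + of_rat (of_int \<beta> / of_nat d) * \<theta> + of_rat (of_int \<gamma> / of_nat d) * \<theta>^2"
      using rr(1) H abg d_pos by (simp add: of_rat_divide add_divide_distrib)
    from coeq[OF this] have rs: "r0 = of_int \<alpha> / of_nat d" "r1 = of_int \<beta> / of_nat d" "r2 = of_int \<gamma> / of_nat d" by auto
    show ?thesis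
      apply (rule exI[of _ \<alpha>], rule exI[of _ \<beta>], rule exI[of _ \<gamma>])
      using rr unfolding rs by (simp add: of_rat_divide of_rat_complex)
  qed
  have nb: "real d ^ 3 * (ev h * (cmod (cj h))^2) ^ j \<ge> 1"
    if hO: "ev h \<in> ring_of_ints \<theta>" and hpos: "ev h > 0" and hnz: "cj h \<noteq> 0" for h j
  proof -
    obtain \<alpha> \<beta> \<gamma> :: int where c1: "ev (h ^ j) = of_int \<alpha> / real d + of_int \<beta> / real d * \<theta> + of_int \<gamma> / real d * \<theta>^2"
      and c2: "cj (h ^ j) = of_real (of_int \<alpha> / real d) + of_real (of_int \<beta> / real d) * \<sigma> + of_real (of_int \<gamma> / real d) * \<sigma>^2"
      using coords[OF hO, of j] by blast
    define A where "A = real_of_int \<alpha>"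
    define B where "B = real_of_int \<beta>"
    define C where "C = real_of_int \<gamma>"
    have c1': "ev h ^ j = (A + B * \<theta> + C * \<theta>^2) / real d"
      using c1 unfolding ev_pow A_def B_def C_def by (simp add: add_divide_distrib)
    have c2': "cj h ^ j = (of_real A + of_real B * \<sigma> + of_real C * \<sigma>^2) / of_real (real d)"
      using c2 unfolding cj_pow A_def B_def C_def by (simp add: add_divide_distrib)
    have "real d ^ 3 * (ev h * (cmod (cj h))^2) ^ j = real d ^ 3 * ev h ^ j * (cmod (cj h ^ j))^2"
      by (simp add: power_mult_distrib norm_power power_mult[symmetric] mult.commute)
    also have "\<dots> = (A + B * \<theta> + C * \<theta>^2) * (cmod (of_real A + of_real B * \<sigma> + of_real C * \<sigma>^2))^2"
      unfolding c1' c2' using d_pos by (simp add: norm_divide power2_eq_square power3_eq_cube field_simps)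
    also have "\<dots> = of_int (\<alpha> * (\<alpha> + \<gamma> * p)^2 - \<alpha> * \<beta>^2 * p - 3 * \<alpha> * \<beta> * \<gamma> * q
       - \<beta> * \<gamma>^2 * p * q + \<beta>^3 * q + \<gamma>^3 * q^2)"
      unfolding \<sigma>_def norm_formula[OF r3 s2] A_def B_def C_def by simp
    finally have eq: "real d ^ 3 * (ev h * (cmod (cj h))^2) ^ j = of_int (\<alpha> * (\<alpha> + \<gamma> * p)^2 - \<alpha> * \<beta>^2 * p - 3 * \<alpha> * \<beta> * \<gamma> * q
       - \<beta> * \<gamma>^2 * p * q + \<beta>^3 * q + \<gamma>^3 * q^2)" .
    have "real d ^ 3 * (ev h * (cmod (cj h))^2) ^ j > 0" using d_pos hpos hnz by simp
    hence "(\<alpha> * (\<alpha> + \<gamma> * p)^2 - \<alpha> * \<beta>^2 * p - 3 * \<alpha> * \<beta> * \<gamma> * q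
       - \<beta> * \<gamma>^2 * p * q + \<beta>^3 * q + \<gamma>^3 * q^2) \<ge> 1" unfolding eq by linarith
    thus ?thesis unfolding eq by linarith
  qed
  have lamO: "lam \<in> ring_of_ints \<theta>" and "\<exists>m \<in> ring_of_ints \<theta>. lam * m = 1" using unit unfolding is_unit_OK_def by auto
  then obtain mm where mmO: "mm \<in> ring_of_ints \<theta>" and lm: "lam * mm = 1" by blast
  obtain f where lamf: "lam = ev f" using lamO unfolding ring_of_ints_def num_field_def ev_def by blast
  obtain g where mmg: "mm = ev g" using mmO unfolding ring_of_ints_def num_field_def ev_def by blast
  have "ev (f * g) = ev 1" using lm unfolding ev_mult ev_1 lamf mmg .
  hence cfg: "cj f * cj g = 1" using wd cj_mult cj_1 by metis
  hence cfnz: "cj f \<noteq> 0" and cgnz: "cj g \<noteq> 0" by auto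
  have lam_pos: "lam > 0" using lam_gt by simp
  have "mm = 1 / lam" using lm lam_pos by (auto simp: field_simps)
  hence mm_pos: "mm > 0" using lam_pos by simp
  define rl where "rl = lam * (cmod (cj f))^2"
  define rm where "rm = mm * (cmod (cj g))^2"
  have rl_pos: "rl > 0" unfolding rl_def using lam_pos cfnz by simp
  have rm_pos: "rm > 0" unfolding rm_def using mm_pos cgnz by simp
  have "rl * rm = (lam * mm) * (cmod (cj f * cj g))^2" unfolding rl_def rm_def by (simp add: norm_mult power_mult_distrib)
  hence rlrm: "rl * rm = 1" using lm cfg by simp
  have rl1: "rl \<ge> 1" using pow_lower_bound_ge1[OF rl_pos _ d_pos] nb[of f] lamO lam_pos cfnz unfolding rl_def lamf by blast
  have rm1: "rm \<ge> 1" using pow_lower_bound_ge1[OF rm_pos _ d_pos] nb[of g] mmO mm_pos cgnz unfolding rm_def mmg by blast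
  have "rl = 1"
  proof (rule ccontr)
    assume "rl \<noteq> 1"
    hence "rl > 1" using rl1 by simp
    moreover have "rl * 1 \<le> rl * rm" using rm1 rl_pos by (intro mult_left_mono) auto
    ultimately have "rl * rm > 1" by linarith
    thus False using rlrm by simp
  qed
  hence cf2: "(cmod (cj f))^2 = 1 / lam" unfolding rl_def using lam_pos by (simp add: field_simps)
  define \<mu> where "\<mu> = of_real (of_rat a) + of_real (of_rat b) * \<sigma> + of_real (of_rat c) * \<sigma>^2"
  have mu_eq: "\<mu> = cj f ^ n"
  proof -
    obtain r0 r1 r2 where rr: "ev (f ^ n) = of_rat r0 + of_rat r1 * \<theta> + of_rat r2 * \<theta>^2"
      "cj (f ^ n) = of_rat r0 + of_rat r1 * \<sigma> + of_rat r2 * \<sigma>^2" using red[of "f ^ n"] by blast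
    have "of_rat r0 + of_rat r1 * \<theta> + of_rat r2 * \<theta>^2 = of_rat a + of_rat b * \<theta> + of_rat c * \<theta>^2"
      using rr(1) abc unfolding ev_pow lamf by simp
    from coeq[OF this] have "r0 = a" "r1 = b" "r2 = c" by auto
    thus ?thesis using rr(2) unfolding cj_pow \<mu>_def by (simp add: of_rat_complex)
  qed
  have mu2: "(cmod \<mu>)^2 = 1 / lam ^ n"
  proof -
    have "(cmod \<mu>)^2 = ((cmod (cj f))^2)^n" unfolding mu_eq norm_power
      by (metis power_mult mult.commute)
    thus ?thesis unfolding cf2 by (simp add: power_one_over)
  qed
  obtain \<alpha> \<beta> \<gamma> :: int where ci: "ev (f ^ n) = of_int \<alpha> / real d + of_int \<beta> / real d * \<theta> + of_int \<gamma> / real d * \<theta>^2"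
    using coords[of f n] lamO lamf by blast
  have "of_rat (of_int \<alpha> / of_nat d) + of_rat (of_int \<beta> / of_nat d) * \<theta> + of_rat (of_int \<gamma> / of_nat d) * \<theta>^2
      = of_rat a + of_rat b * \<theta> + of_rat c * \<theta>^2"
    using ci abc unfolding ev_pow lamf[symmetric] by (simp add: of_rat_divide)
  from coeq[OF this] have abc_int: "a = of_int \<alpha> / of_nat d" "b = of_int \<beta> / of_nat d" "c = of_int \<gamma> / of_nat d" by auto
  define A where "A = real_of_rat a"
  define B where "B = real_of_rat b"
  define Cc where "Cc = real_of_rat c"
  have dA: "real d * A = of_int \<alpha>" unfolding A_def abc_int using d_pos by (simp add: of_rat_divide)
  have dB: "real d * B = of_int \<beta>" unfolding B_def abc_int using d_pos by (simp add: of_rat_divide)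
  have dC: "real d * Cc = of_int \<gamma>" unfolding Cc_def abc_int using d_pos by (simp add: of_rat_divide)
  define R where "R = A - B * \<theta> / 2 + Cc * (\<theta>^2 - s^2) / 4"
  define I where "I = B * s / 2 - Cc * \<theta> * s / 2"
  have reI: "Re \<mu> = R" "Im \<mu> = I" unfolding \<mu>_def \<sigma>_def R_def I_def A_def B_def Cc_def
    by (simp_all add: power2_eq_square field_simps)
  have RI: "R^2 + I^2 = 1 / lam ^ n" using mu2 unfolding cmod_power2 reI .
  define L where "L = lam powr (real n / 2)"
  have L_eq: "L = sqrt (lam ^ n)" unfolding L_def using lam_pos
    by (simp add: powr_half_sqrt_powr powr_realpow)
  have L_pos: "L > 0" unfolding L_eq using lam_pos by simp
  have RIL: "R^2 + I^2 = (1 / L)^2" unfolding RI L_eq using lam_pos by (simp add: power_one_over)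
  have absI: "\<bar>I\<bar> \<le> 1 / L"
  proof -
    have "I^2 \<le> (1/L)^2" using RIL zero_le_power2[of R] by linarith
    hence "\<bar>I\<bar>^2 \<le> (1/L)^2" by simp
    thus ?thesis using power2_le_imp_le[of "\<bar>I\<bar>" "1/L"] L_pos by simp
  qed
  have C1_ge1: "C1 \<ge> sqrt 2" and C1_ge2: "C1 \<ge> sqrt 2 * \<bar>\<theta>\<bar> / s" unfolding C1_def s_def by auto
  have Z_eq: "real d * Z / \<theta> = 2 * real d * I / s"
    unfolding Z_def I_def B_def Cc_def using th0 s_pos by (simp add: field_simps power2_eq_square)
  have Y_eq: "Y = R + \<theta> / s * I"
  proof -
    have "R + \<theta> / s * I = A - B * \<theta> / 2 + Cc * (\<theta>^2 - s^2) / 4 + \<theta> * (B - Cc * \<theta>) / 2"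
      unfolding R_def I_def using s_pos by (simp add: field_simps)
    also have "\<dots> = A + of_int p * Cc - Cc * \<theta>^2" unfolding s2 by (simp add: field_simps power2_eq_square)
    finally show ?thesis unfolding Y_def A_def B_def Cc_def by simp
  qed
  show ?thesis
  proof (intro conjI impI)
    assume hyp: "lam powr (real n / 2) > 2 * sqrt 2 * real d * C1 / \<bar>\<theta>\<bar>"
    have k1: "sqrt 2 * \<bar>\<theta>\<bar> \<le> C1 * s" using C1_ge2 s_pos by (simp add: pos_divide_le_eq)
    have "2 * sqrt 2 * real d * (sqrt 2 * \<bar>\<theta>\<bar>) \<le> 2 * sqrt 2 * real d * (C1 * s)"
      by (rule mult_left_mono[OF k1]) simp
    moreover have "2 * sqrt 2 * real d * (sqrt 2 * \<bar>\<theta>\<bar>) = 2 * real d * \<bar>\<theta>\<bar> * (sqrt 2 * sqrt 2)"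
      by (simp add: algebra_simps)
    ultimately have k2: "4 * real d * \<bar>\<theta>\<bar> \<le> 2 * sqrt 2 * real d * C1 * s" by (simp add: algebra_simps)
    have th_pos: "\<bar>\<theta>\<bar> > 0" using th0 by simp
    have "4 * real d / s \<le> 2 * sqrt 2 * real d * C1 / \<bar>\<theta>\<bar>"
      using k2 s_pos th_pos by (simp add: field_simps)
    hence L4: "L > 4 * real d / s" using hyp unfolding L_def by simp
    have "\<bar>real d * Z / \<theta>\<bar> = 2 * real d * \<bar>I\<bar> / s" unfolding Z_eq using s_pos by (simp add: abs_mult)
    also have "\<dots> \<le> 2 * real d * (1 / L) / s" using absI s_pos d_pos by (intro divide_right_mono mult_left_mono) auto
    also have "\<dots> < 1/2"
    proof -
      have "4 * real d < L * s" using L4 s_pos by (simp add: field_simps)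
      thus ?thesis using L_pos s_pos by (simp add: field_simps)
    qed
    finally have small: "\<bar>- (real d * Z / \<theta>)\<bar> < 1/2" by simp
    have hk: "k * \<theta> = of_int \<beta> + (- (real d * Z / \<theta>))"
      unfolding k_def Z_def using th0 dB[symmetric] unfolding B_def Cc_def
      by (simp add: field_simps power2_eq_square)
    show "signed_frac (k * \<theta>) = - (real d * Z / \<theta>)" unfolding hk by (rule signed_frac_int_plus[OF small])
  next
    assume hyp: "lam powr (real n / 2) > 2 * real d * C1"
    have C1_pos: "C1 > 0" using C1_ge1 by (meson less_le_trans real_sqrt_gt_zero zero_less_numeral)
    have t2: "1 + (\<theta> / s)^2 \<le> C1^2"
    proof -
      have "(sqrt 2)^2 \<le> C1^2" by (rule power_mono[OF C1_ge1]) simp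
      hence a1: "C1^2 \<ge> 2" by simp
      have "(sqrt 2 * \<bar>\<theta>\<bar> / s)^2 = 2 * (\<theta> / s)^2" by (simp add: power_mult_distrib power_divide)
      moreover have "(sqrt 2 * \<bar>\<theta>\<bar> / s)^2 \<le> C1^2" using C1_ge2 s_pos by (intro power_mono) auto
      ultimately have a2: "C1^2 \<ge> 2 * (\<theta> / s)^2" by simp
      show ?thesis using a1 a2 by linarith
    qed
    have "Y^2 \<le> (R^2 + I^2) * (1 + (\<theta> / s)^2)"
    proof -
      have gen: "(R^2 + I^2) * (1 + t^2) - (R + t * I)^2 = (R * t - I)^2" for t :: real
        by (simp add: power2_eq_square algebra_simps)
      have "(R^2 + I^2) * (1 + (\<theta> / s)^2) - Y^2 = (R * (\<theta> / s) - I)^2"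
        unfolding Y_eq by (rule gen)
      thus ?thesis using zero_le_power2[of "R * (\<theta> / s) - I"] by linarith
    qed
    also have "\<dots> \<le> (1/L)^2 * C1^2" unfolding RIL using t2 by (intro mult_left_mono) auto
    also have "\<dots> = (C1 / L)^2" by (simp add: power_divide)
    finally have "\<bar>Y\<bar>^2 \<le> (C1 / L)^2" by simp
    hence "\<bar>Y\<bar> \<le> C1 / L" using power2_le_imp_le[of "\<bar>Y\<bar>" "C1/L"] C1_pos L_pos by simp
    hence "real d * \<bar>Y\<bar> \<le> real d * (C1 / L)" by (rule mult_left_mono) simp
    hence "\<bar>real d * Y\<bar> \<le> real d * (C1 / L)" by (simp add: abs_mult)
    also have "\<dots> < 1/2"
    proof -
      have "2 * real d * C1 < L" using hyp unfolding L_def .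
      thus ?thesis using L_pos by (simp add: field_simps)
    qed
    finally have small: "\<bar>- (real d * Y)\<bar> < 1/2" by simp
    have hk: "k * \<theta>^2 = of_int (\<alpha> + p * \<gamma>) + (- (real d * Y))"
      unfolding k_def Y_def using dA[symmetric] dC[symmetric] unfolding A_def Cc_def
      by (simp add: field_simps)
    show "signed_frac (k * \<theta>^2) = - (real d * Y)" unfolding hk by (rule signed_frac_int_plus[OF small])
  qed
qed

end
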